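(* Let $A,B\in\{0,1\}^{m\times n}$ be such that $(A,B)$ is sorted-flushed. Then $cs(A)=cs(\bar B)$ if and only if $PC(A,B)$.
   Context: For $M\in\{0,1\}^{m\times n}$: $\bar M_{ij}=1-M_{ij}$; $cs(M)=(\sum_i M_{ij})_{j=1..n}$; $ars(M)=(i+\sum_j M_{ij})_{i=1..m}$; $acs(M)=(j+\sum_i M_{ij})_{j=1..n}$. $PC(A,B)$ means $\{acs(A)_1,\dots,acs(A)_n,ars(B)_1,\dots,ars(B)_m\}=\{1,\dots,m+n\}$. $M$ is bottom-left flushed if whenever $M_{ij}=1$, also $M_{i'j'}=1$ for all $i'\ge i$, $j'\le j$. The pair $(A,B)$ is sorted if $acs(A)$ and $ars(B)$ are both strictly increasing sequences; flushed if $B$ is bottom-left flushed; sorted-flushed if both. *)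

theory Defs
  imports Main
begin

(* An m x n 0/1-matrix is represented as a function M :: nat => nat => nat,
   with row indices i in {1..m}, column indices j in {1..n}; only these entries matter. *)

definition is01 :: "nat \<Rightarrow> nat \<Rightarrow> (nat \<Rightarrow> nat \<Rightarrow> nat) \<Rightarrow> bool" where
  "is01 m n M \<longleftrightarrow> (\<forall>i\<in>{1..m}. \<forall>j\<in>{1..n}. M i j \<in> {0, 1})"

definition compl :: "(nat \<Rightarrow> nat \<Rightarrow> nat) \<Rightarrow> (nat \<Rightarrow> nat \<Rightarrow> nat)" where
  "compl M = (\<lambda>i j. 1 - M i j)"

definition cs :: "nat \<Rightarrow> (nat \<Rightarrow> nat \<Rightarrow> nat) \<Rightarrow> nat \<Rightarrow> nat" where
  "cs m M j = (\<Sum>i\<in>{1..m}. M i j)"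

definition ars :: "nat \<Rightarrow> (nat \<Rightarrow> nat \<Rightarrow> nat) \<Rightarrow> nat \<Rightarrow> nat" where
  "ars n M i = i + (\<Sum>j\<in>{1..n}. M i j)"

definition acs :: "nat \<Rightarrow> (nat \<Rightarrow> nat \<Rightarrow> nat) \<Rightarrow> nat \<Rightarrow> nat" where
  "acs m M j = j + (\<Sum>i\<in>{1..m}. M i j)"

definition PC :: "nat \<Rightarrow> nat \<Rightarrow> (nat \<Rightarrow> nat \<Rightarrow> nat) \<Rightarrow> (nat \<Rightarrow> nat \<Rightarrow> nat) \<Rightarrow> bool" where
  "PC m n A B \<longleftrightarrow> acs m A ` {1..n} \<union> ars n B ` {1..m} = {1..m+n}"

definition bottom_left_flushed :: "nat \<Rightarrow> nat \<Rightarrow> (nat \<Rightarrow> nat \<Rightarrow> nat) \<Rightarrow> bool" where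
  "bottom_left_flushed m n M \<longleftrightarrow>
     (\<forall>i\<in>{1..m}. \<forall>j\<in>{1..n}. M i j = 1 \<longrightarrow>
        (\<forall>i'\<in>{1..m}. \<forall>j'\<in>{1..n}. i' \<ge> i \<longrightarrow> j' \<le> j \<longrightarrow> M i' j' = 1))"

definition sorted_pair :: "nat \<Rightarrow> nat \<Rightarrow> (nat \<Rightarrow> nat \<Rightarrow> nat) \<Rightarrow> (nat \<Rightarrow> nat \<Rightarrow> nat) \<Rightarrow> bool" where
  "sorted_pair m n A B \<longleftrightarrow> strict_mono_on {1..n} (acs m A) \<and> strict_mono_on {1..m} (ars n B)"

definition flushed_pair :: "nat \<Rightarrow> nat \<Rightarrow> (nat \<Rightarrow> nat \<Rightarrow> nat) \<Rightarrow> (nat \<Rightarrow> nat \<Rightarrow> nat) \<Rightarrow> bool" where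
  "flushed_pair m n A B \<longleftrightarrow> bottom_left_flushed m n B"

definition sorted_flushed :: "nat \<Rightarrow> nat \<Rightarrow> (nat \<Rightarrow> nat \<Rightarrow> nat) \<Rightarrow> (nat \<Rightarrow> nat \<Rightarrow> nat) \<Rightarrow> bool" where
  "sorted_flushed m n A B \<longleftrightarrow> sorted_pair m n A B \<and> flushed_pair m n A B"

end

theory Submission
  imports Defs
begin

lemma smono_aux:
  fixes f h :: "nat \<Rightarrow> nat"
  assumes sf: "strict_mono_on {1..n} f" and sh: "strict_mono_on {1..n} h"
    and im: "f ` {1..n} = h ` {1..n}"
    and ih: "\<forall>k<j. k \<in> {1..n} \<longrightarrow> f k = h k" and j: "j \<in> {1..n}"
  shows "h j \<le> f j"
proof -
  have "f j \<in> h ` {1..n}" using im j by blast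
  then obtain k where k: "k \<in> {1..n}" "f j = h k" by blast
  show ?thesis
  proof (cases "k < j")
    case True
    then have "f k < f j" using strict_mono_onD[OF sf k(1) j] by blast
    moreover have "f k = h k" using ih True k(1) by blast
    ultimately show ?thesis using k(2) by simp
  next
    case False
    then show ?thesis using strict_mono_on_leD[OF sh j k(1)] k(2) by simp
  qed
qed

lemma smono_img_eq:
  fixes f h :: "nat \<Rightarrow> nat"
  assumes sf: "strict_mono_on {1..n} f" and sh: "strict_mono_on {1..n} h"
    and im: "f ` {1..n} = h ` {1..n}"
  shows "\<forall>j\<in>{1..n}. f j = h j"
proof -
  have "j \<in> {1..n} \<longrightarrow> f j = h j" for j
  proof (induction j rule: less_induct)
    case (less j)
    show ?case
    proof
      assume j: "j \<in> {1..n}"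
      have ih: "\<forall>k<j. k \<in> {1..n} \<longrightarrow> f k = h k" using less by blast
      have ih': "\<forall>k<j. k \<in> {1..n} \<longrightarrow> h k = f k" using less by metis
      show "f j = h j"
        using smono_aux[OF sf sh im ih j] smono_aux[OF sh sf im[symmetric] ih' j] by simp
    qed
  qed
  then show ?thesis by blast
qed

theorem mainTheorem5:
  fixes m n :: nat and A B :: "nat \<Rightarrow> nat \<Rightarrow> nat"
  assumes "is01 m n A" and "is01 m n B"
    and "sorted_flushed m n A B"
  shows "(\<forall>j\<in>{1..n}. cs m A j = cs m (compl B) j) \<longleftrightarrow> PC m n A B"
proof -
  have B01: "\<And>i j. i \<in> {1..m} \<Longrightarrow> j \<in> {1..n} \<Longrightarrow> B i j = 0 \<or> B i j = 1"
    using assms(2) unfolding is01_def by blast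
  have fl: "\<And>i j i' j'. i \<in> {1..m} \<Longrightarrow> j \<in> {1..n} \<Longrightarrow> B i j = 1 \<Longrightarrow> i' \<in> {1..m}
      \<Longrightarrow> j' \<in> {1..n} \<Longrightarrow> i \<le> i' \<Longrightarrow> j' \<le> j \<Longrightarrow> B i' j' = 1"
    using assms(3) unfolding sorted_flushed_def flushed_pair_def bottom_left_flushed_def by blast
  have sA: "strict_mono_on {1..n} (acs m A)" and sB: "strict_mono_on {1..m} (ars n B)"
    using assms(3) unfolding sorted_flushed_def sorted_pair_def by auto
  define f where "f = (\<lambda>j. j + cs m (compl B) j)"
  define g where "g = ars n B"
  have cB: "compl B i j \<le> 1" for i j unfolding compl_def by simp
  have csle: "cs m (compl B) j \<le> m" for j
  proof -
    have "cs m (compl B) j \<le> (\<Sum>i\<in>{1..m}. 1)" unfolding cs_def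
      by (rule sum_mono) (use cB in auto)
    then show ?thesis by simp
  qed
  have sf: "strict_mono_on {1..n} f"
  proof (rule strict_mono_onI)
    fix r s assume r: "r \<in> {1..n}" and s: "s \<in> {1..n}" and rs: "r < s"
    have "cs m (compl B) r \<le> cs m (compl B) s" unfolding cs_def
    proof (rule sum_mono)
      fix i assume i: "i \<in> {1..m}"
      show "compl B i r \<le> compl B i s"
      proof (cases "B i s = 1")
        case True
        then have "B i r = 1" using fl[OF i s True i r] rs by simp
        then show ?thesis unfolding compl_def by simp
      next
        case False
        then have "B i s = 0" using B01 i s by blast
        then show ?thesis unfolding compl_def by simp
      qed
    qed
    then show "f r < f s" unfolding f_def using rs by simp
  qed
  have sg: "strict_mono_on {1..m} g" using sB g_def by simp
  have frange: "f ` {1..n} \<subseteq> {1..m+n}"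
  proof
    fix x assume "x \<in> f ` {1..n}"
    then obtain j where "j \<in> {1..n}" "x = j + cs m (compl B) j" unfolding f_def by blast
    then show "x \<in> {1..m+n}" using csle[of j] by auto
  qed
  have grange: "g ` {1..m} \<subseteq> {1..m+n}"
  proof
    fix x assume "x \<in> g ` {1..m}"
    then obtain i where i: "i \<in> {1..m}" "x = g i" by blast
    have "(\<Sum>j\<in>{1..n}. B i j) \<le> (\<Sum>j\<in>{1..n}. 1)"
      by (rule sum_mono) (use B01 i(1) in fastforce)
    then show "x \<in> {1..m+n}" using i unfolding g_def ars_def by auto
  qed
  have disj: "f j \<noteq> g i" if j: "j \<in> {1..n}" and i: "i \<in> {1..m}" for i j
  proof (cases "B i j = 1")
    case True
    have d: "cs m (compl B) j \<le> i - 1"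
    proof -
      have eq: "{1..m} = {1..i-1} \<union> {i..m}" using i by auto
      have z: "(\<Sum>i'\<in>{i..m}. compl B i' j) = 0"
        using fl[OF i j True _ j] i unfolding compl_def by (auto intro!: sum.neutral)
      have "cs m (compl B) j = (\<Sum>i'\<in>{1..i-1}. compl B i' j) + (\<Sum>i'\<in>{i..m}. compl B i' j)"
        unfolding cs_def eq by (rule sum.union_disjoint) auto
      also have "\<dots> = (\<Sum>i'\<in>{1..i-1}. compl B i' j)" using z by simp
      also have "\<dots> \<le> (\<Sum>i'\<in>{1..i-1}. 1)" by (rule sum_mono) (use cB in auto)
      finally show ?thesis by simp
    qed
    have r: "j \<le> (\<Sum>j'\<in>{1..n}. B i j')"
    proof -
      have "(\<Sum>j'\<in>{1..j}. (1::nat)) = (\<Sum>j'\<in>{1..j}. B i j')"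
        using fl[OF i j True i] j by (auto intro!: sum.cong)
      also have "\<dots> \<le> (\<Sum>j'\<in>{1..n}. B i j')"
        by (rule sum_mono2) (use j in auto)
      finally show ?thesis by simp
    qed
    show ?thesis using d r i unfolding f_def g_def ars_def by auto
  next
    case False
    then have B0: "B i j = 0" using B01 i j by blast
    have d: "i \<le> cs m (compl B) j"
    proof -
      have "(\<Sum>i'\<in>{1..i}. (1::nat)) = (\<Sum>i'\<in>{1..i}. compl B i' j)"
      proof (rule sum.cong)
        fix i' assume i': "i' \<in> {1..i}"
        have "B i' j \<noteq> 1" using fl[of i' j i j] i i' j B0 by auto
        then have "B i' j = 0" using B01[of i' j] i i' j by auto
        then show "1 = compl B i' j" unfolding compl_def by simp
      qed simp
      also have "\<dots> \<le> cs m (compl B) j" unfolding cs_def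
        by (rule sum_mono2) (use i in auto)
      finally show ?thesis by simp
    qed
    have r: "(\<Sum>j'\<in>{1..n}. B i j') \<le> j - 1"
    proof -
      have eq: "{1..n} = {1..j-1} \<union> {j..n}" using j by auto
      have z: "(\<Sum>j'\<in>{j..n}. B i j') = 0"
      proof (rule sum.neutral, rule ballI)
        fix j' assume j': "j' \<in> {j..n}"
        have "B i j' \<noteq> 1" using fl[of i j' i j] i j' j B0 by auto
        then show "B i j' = 0" using B01[of i j'] i j' j by auto
      qed
      have "(\<Sum>j'\<in>{1..n}. B i j') = (\<Sum>j'\<in>{1..j-1}. B i j') + (\<Sum>j'\<in>{j..n}. B i j')"
        unfolding eq by (rule sum.union_disjoint) auto
      also have "\<dots> = (\<Sum>j'\<in>{1..j-1}. B i j')" using z by simp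
      also have "\<dots> \<le> (\<Sum>j'\<in>{1..j-1}. 1)"
        by (rule sum_mono) (use B01 i j in fastforce)
      finally show ?thesis by simp
    qed
    show ?thesis using d r i j unfolding f_def g_def ars_def by auto
  qed
  have FG: "f ` {1..n} \<inter> g ` {1..m} = {}" using disj by blast
  have cf: "card (f ` {1..n}) = n"
    using card_image[OF strict_mono_on_imp_inj_on[OF sf]] by simp
  have cg: "card (g ` {1..m}) = m"
    using card_image[OF strict_mono_on_imp_inj_on[OF sg]] by simp
  have cunion: "card (f ` {1..n} \<union> g ` {1..m}) = m + n"
    using card_Un_disjoint[OF _ _ FG] cf cg by simp
  have U: "f ` {1..n} \<union> g ` {1..m} = {1..m+n}"
    using card_subset_eq[of "{1..m+n}"] frange grange cunion by simp
  show ?thesis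
  proof
    assume H: "\<forall>j\<in>{1..n}. cs m A j = cs m (compl B) j"
    have "acs m A ` {1..n} = f ` {1..n}"
      by (rule image_cong) (use H in \<open>auto simp: acs_def f_def cs_def\<close>)
    then show "PC m n A B" unfolding PC_def using U g_def by simp
  next
    assume "PC m n A B"
    then have P: "acs m A ` {1..n} \<union> g ` {1..m} = {1..m+n}" unfolding PC_def g_def .
    have ca: "card (acs m A ` {1..n}) = n"
      using card_image[OF strict_mono_on_imp_inj_on[OF sA]] by simp
    have "card (acs m A ` {1..n} \<union> g ` {1..m}) = m + n" using P by simp
    moreover have "card (acs m A ` {1..n} \<union> g ` {1..m}) + card (acs m A ` {1..n} \<inter> g ` {1..m})
        = n + m" using card_Un_Int[of "acs m A ` {1..n}" "g ` {1..m}"] ca cg by simp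
    ultimately have "card (acs m A ` {1..n} \<inter> g ` {1..m}) = 0" by simp
    then have AG: "acs m A ` {1..n} \<inter> g ` {1..m} = {}" by simp
    have "acs m A ` {1..n} = {1..m+n} - g ` {1..m}" using P AG by blast
    also have "\<dots> = f ` {1..n}" using U FG by blast
    finally have "\<forall>j\<in>{1..n}. acs m A j = f j" using smono_img_eq[OF sA sf] by blast
    then show "\<forall>j\<in>{1..n}. cs m A j = cs m (compl B) j"
      unfolding acs_def f_def cs_def by simp
  qed
qed

end
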